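(* Consider the $T$-round online first-price auction problem described in the context. For any integer $L_T\in\{1,\dots,T\}$ with $L_T\le\frac T3$, \[ \inf_{\pi\in\Pi}\ \sup_{(v_t,m_t)_{t=1}^T\in\mathcal{L}}\mathbb{E}[\mathrm{DR}_T(\pi)]\ge\frac{L_T}{8}. \]
   Context: Online first-price auction over $T$ rounds: at each round $t$ the learner observes a private value $v_t\in[0,1]$, submits a bid $b_t\in[0,1]$, then observes $m_t\in[0,1]$, the highest bid of the other bidders, and receives reward $r(b_t;v_t,m_t)$ with $r(b;v,m)\coloneqq(v-b)\mathbbm{1}(b\ge m)$. An admissible policy $\pi\in\Pi$ is a sequence of measurable functions $\pi_t$ with $b_t=\pi_t((v_s,m_s)_{s=1}^{t-1},v_t,U)$, where $U$ is the learner's internal random variable. The expected dynamic regret is $\mathbb{E}[\mathrm{DR}_T(\pi)]\coloneqq\sum_{t=1}^T\max\{v_t-m_t,0\}-\sum_{t=1}^T\mathbb{E}[r(b_t;v_t,m_t)]$. $\mathcal{L}\coloneqq\{(v_t,m_t)_{t=1}^T\in[0,1]^{2T}:\sum_{t=2}^T\mathbbm{1}(m_t\ne m_{t-1})\le L_T\}$. *)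

theory Defs
  imports "HOL-Probability.Probability"
begin

text \<open>Reward of bidding b with value v when the highest competing bid is m.\<close>
definition reward :: "real \<Rightarrow> real \<Rightarrow> real \<Rightarrow> real" where
  "reward b v m = (if b \<ge> m then v - b else 0)"

definition history :: "(nat \<Rightarrow> real) \<Rightarrow> (nat \<Rightarrow> real) \<Rightarrow> nat \<Rightarrow> (real \<times> real) list" where
  "history v m t = map (\<lambda>s. (v s, m s)) [1..<t]"

text \<open>Admissible policies: a bid function for each round t, taking the history,
  the current value and the internal randomness u (drawn from the probability space M),
  measurable in u and with bids in [0,1].\<close>
definition admissible :: "'u measure \<Rightarrow> (nat \<Rightarrow> (real \<times> real) list \<Rightarrow> real \<Rightarrow> 'u \<Rightarrow> real) \<Rightarrow> bool" where
  "admissible M \<pi> \<longleftrightarrow>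
     (\<forall>t h x. (\<lambda>u. \<pi> t h x u) \<in> borel_measurable M) \<and>
     (\<forall>t h x. \<forall>u\<in>space M. 0 \<le> \<pi> t h x u \<and> \<pi> t h x u \<le> 1)"

definition env_set :: "nat \<Rightarrow> nat \<Rightarrow> ((nat \<Rightarrow> real) \<times> (nat \<Rightarrow> real)) set" where
  "env_set T L = {(v, m). (\<forall>t\<in>{1..T}. 0 \<le> v t \<and> v t \<le> 1 \<and> 0 \<le> m t \<and> m t \<le> 1) \<and>
                   card {t\<in>{2..T}. m t \<noteq> m (t - 1)} \<le> L}"

definition exp_dyn_regret ::
  "'u measure \<Rightarrow> (nat \<Rightarrow> (real \<times> real) list \<Rightarrow> real \<Rightarrow> 'u \<Rightarrow> real) \<Rightarrow> nat
     \<Rightarrow> (nat \<Rightarrow> real) \<Rightarrow> (nat \<Rightarrow> real) \<Rightarrow> real" where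
  "exp_dyn_regret M \<pi> T v m =
     (\<Sum>t=1..T. max (v t - m t) 0)
     - (\<Sum>t=1..T. \<integral>u. reward (\<pi> t (history v m t) (v t) u) (v t) (m t) \<partial>M)"

end

theory Submission
  imports Defs
begin

definition cho :: "'u measure \<Rightarrow> (nat \<Rightarrow> (real \<times> real) list \<Rightarrow> real \<Rightarrow> 'u \<Rightarrow> real) \<Rightarrow> nat \<Rightarrow> (real \<times> real) list \<Rightarrow> real" where
  "cho M \<pi> t h = (if (\<integral>u. \<pi> t h 1 u \<partial>M) \<ge> 1/4 then 0 else 1/2)"

fun mseq :: "'u measure \<Rightarrow> (nat \<Rightarrow> (real \<times> real) list \<Rightarrow> real \<Rightarrow> 'u \<Rightarrow> real) \<Rightarrow> nat \<Rightarrow> nat \<Rightarrow> real" where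
  "mseq M \<pi> L 0 = 0"
| "mseq M \<pi> L (Suc n) = (if Suc n \<le> L + 1 then cho M \<pi> (Suc n) (map (\<lambda>s. (1, mseq M \<pi> L s)) [1..<Suc n]) else mseq M \<pi> L n)"

lemma meas_pi:
  assumes "admissible M \<pi>"
  shows "(\<lambda>u. \<pi> t h x u) \<in> borel_measurable M"
  using assms unfolding admissible_def by blast

lemma bnd_pi:
  assumes "admissible M \<pi>"
  shows "\<forall>u\<in>space M. 0 \<le> \<pi> t h x u \<and> \<pi> t h x u \<le> 1"
  using assms unfolding admissible_def by blast

lemma int_pi:
  assumes "prob_space M" "admissible M \<pi>"
  shows "integrable M (\<lambda>u. \<pi> t h x u)"
proof -
  interpret prob_space M by fact
  show ?thesis
    apply (rule integrable_const_bound[where B=1])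
    using bnd_pi[OF assms(2), of t h x] apply (auto intro!: AE_I2)[1]
    using meas_pi[OF assms(2)] by simp
qed

lemma int_rew:
  assumes "prob_space M" "admissible M \<pi>"
  shows "integrable M (\<lambda>u. reward (\<pi> t h x u) v m)"
proof -
  interpret prob_space M by fact
  have mb: "(\<lambda>u. \<pi> t h x u) \<in> borel_measurable M" by (rule meas_pi[OF assms(2)])
  have "(\<lambda>u. reward (\<pi> t h x u) v m) \<in> borel_measurable M"
    unfolding reward_def using mb by measurable
  moreover have "AE u in M. norm (reward (\<pi> t h x u) v m) \<le> \<bar>v\<bar> + 1"
    using bnd_pi[OF assms(2), of t h x] by (auto intro!: AE_I2 simp: reward_def)
  ultimately show ?thesis
    by (intro integrable_const_bound[where B="\<bar>v\<bar> + 1"]) auto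
qed

lemma rew_lower:
  assumes "prob_space M" "admissible M \<pi>" "0 \<le> v"
  shows "(\<integral>u. reward (\<pi> t h x u) v m \<partial>M) \<ge> -1"
proof -
  interpret prob_space M by fact
  have "(\<integral>u. -1 \<partial>M) \<le> (\<integral>u. reward (\<pi> t h x u) v m \<partial>M)"
    apply (rule integral_mono[OF _ int_rew[OF assms(1,2)]])
    using bnd_pi[OF assms(2), of t h x] assms(3) by (auto simp: reward_def)
  then show ?thesis by (simp add: prob_space)
qed

lemma rew_upper:
  assumes "prob_space M" "admissible M \<pi>" "0 \<le> m"
  shows "(\<integral>u. reward (\<pi> t h x u) v m \<partial>M) \<le> max (v - m) 0"
proof -
  interpret prob_space M by fact
  have "(\<integral>u. reward (\<pi> t h x u) v m \<partial>M) \<le> (\<integral>u. max (v - m) 0 \<partial>M)"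
    apply (rule integral_mono[OF int_rew[OF assms(1,2)]])
    using bnd_pi[OF assms(2), of t h x] by (auto simp: reward_def)
  then show ?thesis by (simp add: prob_space)
qed

lemma round_good:
  assumes "prob_space M" "admissible M \<pi>"
  shows "max (1 - cho M \<pi> t h) 0 - (\<integral>u. reward (\<pi> t h 1 u) 1 (cho M \<pi> t h) \<partial>M) \<ge> 1/4"
proof -
  interpret prob_space M by fact
  note ib = int_pi[OF assms, of t h 1]
  show ?thesis
  proof (cases "(\<integral>u. \<pi> t h 1 u \<partial>M) \<ge> 1/4")
    case True
    have "(\<integral>u. reward (\<pi> t h 1 u) 1 0 \<partial>M) = (\<integral>u. 1 - \<pi> t h 1 u \<partial>M)"
      apply (rule Bochner_Integration.integral_cong[OF refl])
      using bnd_pi[OF assms(2), of t h 1] by (auto simp: reward_def)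
    also have "\<dots> = 1 - (\<integral>u. \<pi> t h 1 u \<partial>M)"
      using ib by (simp add: prob_space)
    finally show ?thesis using True by (simp add: cho_def)
  next
    case False
    have "(\<integral>u. reward (\<pi> t h 1 u) 1 (1/2) \<partial>M) \<le> (\<integral>u. \<pi> t h 1 u \<partial>M)"
      apply (rule integral_mono[OF int_rew[OF assms] ib])
      using bnd_pi[OF assms(2), of t h 1] by (auto simp: reward_def)
    then show ?thesis using False by (simp add: cho_def)
  qed
qed

lemma mseq_vals: "mseq M \<pi> L n = 0 \<or> mseq M \<pi> L n = 1/2"
  by (induction n) (auto simp: cho_def)

lemma mseq_const: "n > L + 1 \<Longrightarrow> mseq M \<pi> L n = mseq M \<pi> L (n - 1)"
  by (cases n) auto

lemma mseq_cho: "1 \<le> t \<Longrightarrow> t \<le> L + 1 \<Longrightarrow>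
   mseq M \<pi> L t = cho M \<pi> t (history (\<lambda>_. 1) (mseq M \<pi> L) t)"
  by (cases t) (auto simp: history_def)

theorem theorem5:
  fixes M :: "'u measure" and T L :: nat
  assumes "prob_space M"
    and "1 \<le> L" and "L \<le> T" and "3 * L \<le> T"
    and "admissible M \<pi>"
  shows "(SUP vm \<in> env_set T L. exp_dyn_regret M \<pi> T (fst vm) (snd vm)) \<ge> real L / 8"
proof -
  define m where "m = mseq M \<pi> L"
  define v :: "nat \<Rightarrow> real" where "v = (\<lambda>_. 1)"
  have mv: "m t = 0 \<or> m t = 1/2" for t unfolding m_def using mseq_vals by blast
  have sub: "{t\<in>{2..T}. m t \<noteq> m (t - 1)} \<subseteq> {2..L+1}"
  proof
    fix t assume "t \<in> {t\<in>{2..T}. m t \<noteq> m (t - 1)}"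
    then have "2 \<le> t" "m t \<noteq> m (t - 1)" by auto
    moreover have "t \<le> L + 1"
    proof (rule ccontr)
      assume "\<not> t \<le> L + 1"
      then have "m t = m (t - 1)" unfolding m_def by (intro mseq_const) simp
      with \<open>m t \<noteq> m (t - 1)\<close> show False by simp
    qed
    ultimately show "t \<in> {2..L+1}" by simp
  qed
  have "card {t\<in>{2..T}. m t \<noteq> m (t - 1)} \<le> card {2..L+1}"
    by (rule card_mono[OF _ sub]) simp
  then have env: "(v, m) \<in> env_set T L"
  proof -
    have c: "card {t\<in>{2..T}. m t \<noteq> m (t - 1)} \<le> L" using \<open>card _ \<le> card _\<close> by simp
    have "\<forall>t\<in>{1..T}. 0 \<le> v t \<and> v t \<le> 1 \<and> 0 \<le> m t \<and> m t \<le> 1"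
    proof
      fix t show "0 \<le> v t \<and> v t \<le> 1 \<and> 0 \<le> m t \<and> m t \<le> 1"
        using mv[of t] unfolding v_def by auto
    qed
    then show ?thesis unfolding env_set_def using c by simp
  qed
  define f where "f t = max (v t - m t) 0 - (\<integral>u. reward (\<pi> t (history v m t) (v t) u) (v t) (m t) \<partial>M)" for t
  have reg: "exp_dyn_regret M \<pi> T v m = (\<Sum>t=1..T. f t)"
    unfolding exp_dyn_regret_def f_def by (simp add: sum_subtractf)
  have fnn: "f t \<ge> 0" for t
    using rew_upper[OF assms(1,5), of "m t" t "history v m t" "v t" "v t"] mv[of t]
    unfolding f_def by auto
  have fgood: "f t \<ge> 1/4" if "1 \<le> t" "t \<le> L" for t
    using round_good[OF assms(1,5), of t "history v m t"] mseq_cho[of t L M \<pi>] that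
    unfolding f_def v_def m_def by simp
  have "real L / 8 \<le> (\<Sum>t=1..L. (1/4::real))" by simp
  also have "\<dots> \<le> (\<Sum>t=1..L. f t)" by (rule sum_mono) (use fgood in auto)
  also have "\<dots> \<le> (\<Sum>t=1..T. f t)"
    by (rule sum_mono2) (use fnn assms(3) in auto)
  finally have lb: "real L / 8 \<le> exp_dyn_regret M \<pi> T v m" using reg by simp
  have bdd: "bdd_above ((\<lambda>vm. exp_dyn_regret M \<pi> T (fst vm) (snd vm)) ` env_set T L)"
  proof (rule bdd_aboveI2)
    fix vm assume "vm \<in> env_set T L"
    then have h: "\<forall>t\<in>{1..T}. 0 \<le> fst vm t \<and> fst vm t \<le> 1 \<and> 0 \<le> snd vm t \<and> snd vm t \<le> 1"
      unfolding env_set_def by auto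
    have a: "(\<Sum>t=1..T. max (fst vm t - snd vm t) 0) \<le> (\<Sum>t=1..T. (1::real))"
    proof (rule sum_mono)
      fix t assume "t \<in> {1..T}"
      then show "max (fst vm t - snd vm t) 0 \<le> 1" using h by fastforce
    qed
    have b: "(\<Sum>t=1..T. (-1::real)) \<le> (\<Sum>t=1..T. \<integral>u. reward (\<pi> t (history (fst vm) (snd vm) t) (fst vm t) u) (fst vm t) (snd vm t) \<partial>M)"
      by (rule sum_mono) (use h rew_lower[OF assms(1,5)] in auto)
    show "exp_dyn_regret M \<pi> T (fst vm) (snd vm) \<le> 2 * real T"
      unfolding exp_dyn_regret_def using a b by simp
  qed
  show ?thesis
    apply (rule order_trans[OF lb])
    using cSUP_upper[OF env bdd] by simp
qed

end
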